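(* With $g_n$, $C_t$, $D_t$ as in the context, for every $t\ge1$: \[g_{2t+1}(t)=\frac12+\frac{D_t}{2C_t},\qquad g_{2t}(t)=1-\frac{D_t}{C_t},\qquad g_{2t}(t-1)=\frac{2D_t}{C_t},\] and in particular $g_{2t}(t-1)+g_{2t}(t)=1+D_t/C_t$.
   Context: Let $\mathcal X=\{A,B,C,D\}$ and let $(X_i)_{i\ge1}$ be the first-order Markov chain on $\mathcal X$ with $\mathbb P(X_1=x)=1/4$ for all $x$ and transitions: from $A$ to $A$ or $C$ w.p. $1/2$ each; from $B$ to $B$ or $D$ w.p. $1/2$ each; from $C$ and from $D$ to each of $A,B,C,D$ w.p. $1/4$. A nonempty string is admissible if all consecutive transitions have positive probability; $\mathcal A$ is the set of admissible nonempty strings; $K(u):=-\log_2\mathbb P(X_1^m=u)$ for $u=x_1^m\in\mathcal A$. Shortlex source code $C$: order nonempty binary strings by length then lexicographically as $b_1,b_2,\dots$; order $\mathcal A$ as $u_1,u_2,\dots$ by increasing $K$, then increasing length, then lexicographically with $A<B<C<D$; set $C(u_j):=b_j$. Let $K_n:=K(X_1^n)$, $L_n:=|C(X_1^n)|$, $I_n:=\mathbf 1\{L_n=K_n-1\}$, $X:=\#\{i\in\{1,\dots,n-1\}:X_i\in\{C,D\}\}$, and $g_n(x):=\mathbb P(I_n=1\mid X=x)$. For integers $m,j$ let $U(m,j):=\binom{m-j}{j}2^j$ if $0\le j$, $2j\le m$, else $0$; $C_t:=\binom{2t}{t}2^t$; $D_t:=\sum_{j=0}^{t-1}U(3t,j)-\sum_{j\ge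 t+1}U(3t,j)$. *)

theory Defs
  imports Complex_Main
begin

datatype letter = LA | LB | LC | LD

definition idx :: "letter \<Rightarrow> nat" where
  "idx x = (case x of LA \<Rightarrow> 0 | LB \<Rightarrow> 1 | LC \<Rightarrow> 2 | LD \<Rightarrow> 3)"

definition trans :: "letter \<Rightarrow> letter \<Rightarrow> real" where
  "trans x y = (case x of
       LA \<Rightarrow> (if y = LA \<or> y = LC then 1/2 else 0)
     | LB \<Rightarrow> (if y = LB \<or> y = LD then 1/2 else 0)
     | LC \<Rightarrow> 1/4
     | LD \<Rightarrow> 1/4)"

fun path_prob :: "letter \<Rightarrow> letter list \<Rightarrow> real" where
  "path_prob x [] = 1"
| "path_prob x (y # ys) = trans x y * path_prob y ys"

text \<open>P(X_1^m = u), with the uniform initial distribution.\<close>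
fun seq_prob :: "letter list \<Rightarrow> real" where
  "seq_prob [] = 1"
| "seq_prob (x # xs) = 1/4 * path_prob x xs"

definition admissible :: "letter list \<Rightarrow> bool" where
  "admissible u \<longleftrightarrow> u \<noteq> [] \<and> (\<forall>i. Suc i < length u \<longrightarrow> trans (u ! i) (u ! Suc i) > 0)"

definition Kc :: "letter list \<Rightarrow> real" where
  "Kc u = - log 2 (seq_prob u)"

definition aprec :: "letter list \<Rightarrow> letter list \<Rightarrow> bool" where
  "aprec v u \<longleftrightarrow> Kc v < Kc u \<or>
     (Kc v = Kc u \<and> (length v < length u \<or>
       (length v = length u \<and> (map idx v, map idx u) \<in> lexord {(a, b). a < b})))"

text \<open>0-based position of u in the enumeration u_1, u_2, ... (so u = u_(arank u + 1)).\<close>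
definition arank :: "letter list \<Rightarrow> nat" where
  "arank u = card {v. admissible v \<and> aprec v u}"

text \<open>Shortlex order on nonempty binary strings (0 = False < 1 = True).\<close>
definition bprec :: "bool list \<Rightarrow> bool list \<Rightarrow> bool" where
  "bprec v w \<longleftrightarrow> length v < length w \<or>
     (length v = length w \<and> (v, w) \<in> lexord {(a, b). a < b})"

definition brank :: "bool list \<Rightarrow> nat" where
  "brank w = card {v. v \<noteq> [] \<and> bprec v w}"

text \<open>Shortlex source code: C(u_j) = b_j.\<close>
definition code :: "letter list \<Rightarrow> bool list" where
  "code u = (THE w. w \<noteq> [] \<and> brank w = arank u)"

definition isCD :: "letter \<Rightarrow> bool" where
  "isCD x \<longleftrightarrow> x = LC \<or> x = LD"

definition Xcount :: "letter list \<Rightarrow> nat" where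
  "Xcount u = length (filter isCD (butlast u))"

definition Iev :: "letter list \<Rightarrow> bool" where
  "Iev u \<longleftrightarrow> real (length (code u)) = Kc u - 1"

text \<open>g_n(x) = P(I_n = 1 | X = x).\<close>
definition g :: "nat \<Rightarrow> nat \<Rightarrow> real" where
  "g n x = (\<Sum>u\<in>{u. length u = n \<and> Xcount u = x \<and> Iev u}. seq_prob u) /
           (\<Sum>u\<in>{u. length u = n \<and> Xcount u = x}. seq_prob u)"

definition U :: "nat \<Rightarrow> nat \<Rightarrow> real" where
  "U m j = (if 2 * j \<le> m then real ((m - j) choose j) * 2 ^ j else 0)"

definition Ct :: "nat \<Rightarrow> real" where
  "Ct t = real ((2 * t) choose t) * 2 ^ t"

text \<open>U(3t,j) = 0 for j > 3t, so the second sum is finite.\<close>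
definition Dt :: "nat \<Rightarrow> real" where
  "Dt t = (\<Sum>j<t. U (3 * t) j) - (\<Sum>j\<in>{t+1..3*t}. U (3 * t) j)"

end

theory Submission
  imports Defs
begin

definition Ur :: "nat \<Rightarrow> nat \<Rightarrow> real" where
  "Ur m j = real ((m - j) choose j) * 2 ^ j"

lemma U_eq_Ur: "U m j = Ur m j"
  unfolding U_def Ur_def by (auto simp: binomial_eq_0)

lemma Ur_zero: "m < j \<Longrightarrow> Ur m j = 0"
  unfolding Ur_def by (simp add: binomial_eq_0)

lemma Ur_zero2: "m < 2 * j \<Longrightarrow> Ur m j = 0"
  unfolding Ur_def by (simp add: binomial_eq_0)

lemma Ur_0 [simp]: "Ur m 0 = 1"
  unfolding Ur_def by simp

lemma Ur_nonneg: "Ur m j \<ge> 0"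
  unfolding Ur_def by simp

lemma Ur_pascal: "Ur (Suc (Suc m)) (Suc j) = Ur (Suc m) (Suc j) + 2 * Ur m j"
proof (cases "j \<le> m")
  case True
  then have e: "Suc (Suc m) - Suc j = Suc (m - j)" "Suc m - Suc j = m - j" by auto
  show ?thesis unfolding Ur_def e by (simp add: algebra_simps)
next
  case False
  then show ?thesis by (simp add: Ur_zero Ur_zero2)
qed

lemma sum_ext_Ur:
  assumes "m \<le> N"
  shows "(\<Sum>j\<le>N. f j * Ur m j) = (\<Sum>j\<le>m. f j * Ur m j)"
  by (rule sum.mono_neutral_right) (use assms in \<open>auto simp: Ur_zero\<close>)

lemma sum_pascal:
  "(\<Sum>j\<le>Suc (Suc m). f j * Ur (Suc (Suc m)) j)
   = (\<Sum>j\<le>Suc m. f j * Ur (Suc m) j) + 2 * (\<Sum>j\<le>m. f (Suc j) * Ur m j)"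
proof -
  have "(\<Sum>j\<le>Suc (Suc m). f j * Ur (Suc (Suc m)) j)
      = f 0 + (\<Sum>j\<le>Suc m. f (Suc j) * Ur (Suc (Suc m)) (Suc j))"
    by (subst sum.atMost_Suc_shift) simp
  also have "\<dots> = f 0 + (\<Sum>j\<le>Suc m. f (Suc j) * Ur (Suc m) (Suc j))
       + 2 * (\<Sum>j\<le>Suc m. f (Suc j) * Ur m j)"
    by (simp add: Ur_pascal algebra_simps sum.distrib sum_distrib_left)
  also have "f 0 + (\<Sum>j\<le>Suc m. f (Suc j) * Ur (Suc m) (Suc j))
      = (\<Sum>j\<le>Suc (Suc m). f j * Ur (Suc m) j)"
    by (subst (2) sum.atMost_Suc_shift) simp
  also have "\<dots> = (\<Sum>j\<le>Suc m. f j * Ur (Suc m) j)"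
    by (rule sum_ext_Ur) simp
  also have "(\<Sum>j\<le>Suc m. f (Suc j) * Ur m j) = (\<Sum>j\<le>m. f (Suc j) * Ur m j)"
    by (rule sum_ext_Ur) simp
  finally show ?thesis .
qed

definition Wf :: "nat \<Rightarrow> real" where
  "Wf m = (\<Sum>j\<le>m. Ur m j)"

definition Gf :: "nat \<Rightarrow> nat \<Rightarrow> real" where
  "Gf m a = (\<Sum>j\<le>m. (if a \<le> j then 1 else 0) * Ur m j)"

lemma Wf_alt: "Wf m = (\<Sum>j\<le>m. 1 * Ur m j)"
  unfolding Wf_def by simp

lemma Wf_0 [simp]: "Wf 0 = 1" unfolding Wf_def by simp
lemma Wf_1 [simp]: "Wf (Suc 0) = 1" unfolding Wf_def by (simp add: Ur_zero2)

lemma Wf_rec: "Wf (Suc (Suc m)) = Wf (Suc m) + 2 * Wf m"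
  unfolding Wf_alt by (rule sum_pascal)

lemma Gf_rec: "Gf (Suc (Suc m)) (Suc a) = Gf (Suc m) (Suc a) + 2 * Gf m a"
  unfolding Gf_def by (subst sum_pascal) simp

lemma Gf_0: "Gf m 0 = Wf m"
  unfolding Gf_def Wf_def by simp

lemma Gf_zero: "m < 2 * a \<Longrightarrow> Gf m a = 0"
  unfolding Gf_def by (rule sum.neutral) (auto simp: Ur_zero2)

lemma Wf_pow: "Wf m + Wf (Suc m) = 2 ^ Suc m"
proof (induction m rule: nat_less_induct)
  case (1 m)
  show ?case
  proof (cases m)
    case 0 then show ?thesis by simp
  next
    case (Suc k)
    then have "Wf k + Wf (Suc k) = 2 ^ Suc k" using 1 by simp
    then show ?thesis using Suc Wf_rec[of k] by simp
  qed
qed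

lemma Wf_nonneg: "Wf m \<ge> 0"
  unfolding Wf_def by (rule sum_nonneg) (simp add: Ur_nonneg)

lemma Gf_nonneg: "Gf m a \<ge> 0"
  unfolding Gf_def by (rule sum_nonneg) (simp add: Ur_nonneg)

lemma Wf_le: "Wf m \<le> 2 ^ m"
proof (cases m)
  case 0 then show ?thesis by simp
next
  case (Suc k) then show ?thesis using Wf_pow[of k] Wf_nonneg[of k] by simp
qed

lemma Wf_cumsum: "(\<Sum>i<m. 4 * Wf i) = 2 ^ (m + 2) - 2 - 2 * Wf m"
proof (induction m)
  case 0 then show ?case by simp
next
  case (Suc m)
  then show ?case using Wf_pow[of m] by simp
qed

lemma binom_pascal_sum:
  "(\<Sum>i\<le>Suc n. f i * real (Suc n choose i)) = (\<Sum>i\<le>n. (f i + f (Suc i)) * real (n choose i))"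
proof -
  have "(\<Sum>i\<le>Suc n. f i * real (Suc n choose i))
      = f 0 + (\<Sum>i\<le>n. f (Suc i) * real (Suc n choose Suc i))"
    by (subst sum.atMost_Suc_shift) simp
  also have "\<dots> = f 0 + (\<Sum>i\<le>n. f (Suc i) * real (n choose Suc i))
                 + (\<Sum>i\<le>n. f (Suc i) * real (n choose i))"
    by (simp add: algebra_simps sum.distrib)
  also have "f 0 + (\<Sum>i\<le>n. f (Suc i) * real (n choose Suc i)) = (\<Sum>i\<le>Suc n. f i * real (n choose i))"
    using sum.atMost_Suc_shift[of "\<lambda>i. f i * real (n choose i)" n] by simp
  also have "\<dots> = (\<Sum>i\<le>n. f i * real (n choose i))"
    by simp
  finally show ?thesis by (simp add: algebra_simps sum.distrib)
qed

definition Sb :: "nat \<Rightarrow> nat \<Rightarrow> real" where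
  "Sb n t = (\<Sum>i\<le>n. (if t \<le> i then 1 else 0) * real (n choose i))"

lemma Sb_rec: "Sb (Suc n) (Suc t) = Sb n (Suc t) + Sb n t"
  unfolding Sb_def by (subst binom_pascal_sum) (simp add: sum.distrib algebra_simps)

lemma Sb_0: "Sb n 0 = 2 ^ n"
  unfolding Sb_def using choose_row_sum[of n] by (simp flip: of_nat_sum)

lemma K_identity: "Gf (n + t) t + Gf (n + t + 1) t = 2 ^ t * Sb (n + 1) t"
proof (induction t arbitrary: n)
  case 0
  show ?case using Wf_pow[of n] by (simp add: Gf_0 Sb_0)
next
  case (Suc t)
  note outer = Suc.IH
  show ?case
  proof (induction n)
    case 0
    show ?case
    proof (cases t)
      case 0
      have "Gf (Suc (Suc 0)) (Suc 0) = 2" unfolding Gf_def by (simp add: Ur_def)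
      moreover have "Gf 1 1 = 0" by (rule Gf_zero) simp
      moreover have "Sb 1 1 = 1" unfolding Sb_def by simp
      ultimately show ?thesis using 0 by simp
    next
      case (Suc t')
      have "Gf (Suc t) (Suc t) = 0" by (rule Gf_zero) simp
      moreover have "Gf (Suc t + 1) (Suc t) = 0" by (rule Gf_zero) (simp add: Suc)
      moreover have "Sb 1 (Suc t) = 0" unfolding Sb_def using Suc by simp
      ultimately show ?thesis by simp
    qed
  next
    case (Suc n)
    have a: "Gf (Suc n + Suc t) (Suc t) = Gf (n + Suc t) (Suc t) + 2 * Gf (n + t) t"
      using Gf_rec[of "n + t" t] by simp
    have b: "Gf (Suc n + Suc t + 1) (Suc t) = Gf (Suc n + Suc t) (Suc t) + 2 * Gf (n + t + 1) t"
      using Gf_rec[of "n + t + 1" t] by simp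
    have c: "Sb (Suc n + 1) (Suc t) = Sb (n + 1) (Suc t) + Sb (n+1) t"
      using Sb_rec[of "n+1" t] by simp
    show ?case using Suc.IH outer[of n] outer[of "Suc n"] a b c
      by (simp add: algebra_simps)
  qed
qed

lemma binom_reflect:
  "(\<Sum>i\<le>n. h i * real (n choose i)) = (\<Sum>i\<le>n. h (n - i) * real (n choose i))"
proof -
  have "(\<Sum>i\<le>n. h i * real (n choose i)) = (\<Sum>i\<in>{0..n}. h i * real (n choose i))"
    by (simp add: atLeast0AtMost)
  also have "\<dots> = (\<Sum>i\<in>{0..n}. h (n - i) * real (n choose (n - i)))"
    by (subst sum.atLeastAtMost_rev) simp
  also have "\<dots> = (\<Sum>i\<in>{0..n}. h (n - i) * real (n choose i))"
    by (rule sum.cong) (auto simp: binomial_symmetric[symmetric])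
  finally show ?thesis by (simp add: atLeast0AtMost)
qed

definition Mid :: "nat \<Rightarrow> nat \<Rightarrow> real" where
  "Mid n t = (\<Sum>i\<le>n. (if n < i + t \<and> i < t then 1 else 0) * real (n choose i))"

lemma mid_identity:
  assumes "n < 2 * t"
  shows "2 ^ n = 2 * Sb n t + Mid n t"
proof -
  have r: "Sb n t = (\<Sum>i\<le>n. (if i + t \<le> n then 1 else 0) * real (n choose i))"
  proof -
    have "Sb n t = (\<Sum>i\<le>n. (if t \<le> n - i then 1 else 0) * real (n choose i))"
      unfolding Sb_def by (rule binom_reflect)
    also have "\<dots> = (\<Sum>i\<le>n. (if i + t \<le> n then 1 else 0) * real (n choose i))"
      by (rule sum.cong) auto
    finally show ?thesis .
  qed
  have "(2::real) ^ n = (\<Sum>i\<le>n. 1 * real (n choose i))"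
    using choose_row_sum[of n] by (simp flip: of_nat_sum)
  also have "\<dots> = (\<Sum>i\<le>n. ((if t \<le> i then 1 else 0) + (if i + t \<le> n then 1 else 0)
        + (if n < i + t \<and> i < t then 1 else 0)) * real (n choose i))"
    by (rule sum.cong) (use assms in auto)
  also have "\<dots> = Sb n t + (\<Sum>i\<le>n. (if i + t \<le> n then 1 else 0) * real (n choose i)) + Mid n t"
    unfolding Sb_def Mid_def by (simp add: algebra_simps sum.distrib)
  also have "\<dots> = Sb n t + Sb n t + Mid n t" using r by simp
  finally show ?thesis by simp
qed

lemma Mid_mono:
  assumes "n + 3 \<le> 2 * t"
  shows "Mid n t \<le> Mid (Suc n) t"
proof -
  have "Mid (Suc n) t = (\<Sum>i\<le>n. ((if Suc n < i + t \<and> i < t then 1 else 0)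
      + (if Suc n < Suc i + t \<and> Suc i < t then 1 else 0)) * real (n choose i))"
    unfolding Mid_def by (rule binom_pascal_sum)
  moreover have "Mid n t \<le> (\<Sum>i\<le>n. ((if Suc n < i + t \<and> i < t then 1 else 0)
      + (if Suc n < Suc i + t \<and> Suc i < t then 1 else 0)) * real (n choose i))"
    unfolding Mid_def by (rule sum_mono) (use assms in auto)
  ultimately show ?thesis by simp
qed

lemma Mid_nonneg: "Mid n t \<ge> 0"
  unfolding Mid_def by (rule sum_nonneg) simp


definition Zf :: "nat \<Rightarrow> nat \<Rightarrow> real" where
  "Zf t N = Wf N - 2 * Gf N t"

definition ee :: "nat \<Rightarrow> nat \<Rightarrow> real" where
  "ee t N = (if N \<le> t then 2 ^ N else 2 ^ t * Mid (N - t) t)"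

lemma Mid_0: "0 < t \<Longrightarrow> Mid 0 t = 1"
  unfolding Mid_def by simp

lemma ee_alt: "0 < t \<Longrightarrow> t \<le> N \<Longrightarrow> ee t N = 2 ^ t * Mid (N - t) t"
  unfolding ee_def by (auto simp: Mid_0)

lemma Z_sum:
  assumes "0 < t" "Suc N < 3 * t"
  shows "Zf t N + Zf t (Suc N) = ee t (Suc N)"
proof (cases "Suc N \<le> t")
  case True
  have "Gf N t = 0" "Gf (Suc N) t = 0" using True assms by (auto intro: Gf_zero)
  then show ?thesis using True Wf_pow[of N] unfolding Zf_def ee_def by simp
next
  case False
  define n where "n = N - t"
  have N: "N = n + t" using False n_def by simp
  have K: "Gf (n + t) t + Gf (n + t + 1) t = 2 ^ t * Sb (n + 1) t" by (rule K_identity)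
  have M: "2 ^ (n+1) = 2 * Sb (n+1) t + Mid (n+1) t"
    by (rule mid_identity) (use assms N in simp)
  have W: "Wf N + Wf (Suc N) = 2 ^ t * 2 ^ (n + 1)"
    using Wf_pow[of N] N by (simp add: power_add)
  have E0: "ee t (Suc N) = 2 ^ t * Mid (Suc N - t) t"
    using False unfolding ee_def by (simp only: if_False)
  have "Suc N - t = n + 1" using N by simp
  then have E: "ee t (Suc N) = 2 ^ t * Mid (n + 1) t" using E0 by simp
  have K': "Gf N t + Gf (Suc N) t = 2 ^ t * Sb (n+1) t" using K unfolding N by simp
  have M': "Mid (n+1) t = 2 ^ (n+1) - 2 * Sb (n+1) t" using M by linarith
  have "Zf t N + Zf t (Suc N) = (Wf N + Wf (Suc N)) - 2 * (Gf N t + Gf (Suc N) t)"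
    unfolding Zf_def by simp
  also have "\<dots> = 2 ^ t * 2 ^ (n + 1) - 2 * (2 ^ t * Sb (n+1) t)" by (simp only: W K')
  also have "\<dots> = 2 ^ t * (2 ^ (n + 1) - 2 * Sb (n+1) t)" by (simp add: right_diff_distrib)
  finally show ?thesis unfolding E M' .
qed

lemma ee_mono:
  assumes "0 < t" "Suc N + 2 \<le> 3 * t"
  shows "ee t N \<le> ee t (Suc N)"
proof (cases "Suc N \<le> t")
  case True
  then show ?thesis unfolding ee_def by simp
next
  case False
  then have "t \<le> N" by simp
  then have "Mid (N - t) t \<le> Mid (Suc (N - t)) t"
    by (intro Mid_mono) (use assms in simp)
  moreover have "Suc N - t = Suc (N - t)" using \<open>t \<le> N\<close> by simp
  ultimately show ?thesis using ee_alt[OF assms(1) \<open>t \<le> N\<close>] ee_alt[OF assms(1), of "Suc N"] \<open>t \<le> N\<close>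
    by simp
qed

lemma Z_bounds:
  assumes "0 < t" "N + 2 \<le> 3 * t"
  shows "0 \<le> Zf t N \<and> Zf t N \<le> ee t N"
  using assms(2)
proof (induction N)
  case 0
  have "Gf 0 t = 0" using assms by (intro Gf_zero) simp
  then have "Zf t 0 = 1" unfolding Zf_def by simp
  moreover have "ee t 0 = 1" unfolding ee_def by simp
  ultimately show ?case by simp
next
  case (Suc N)
  have IH: "0 \<le> Zf t N \<and> Zf t N \<le> ee t N" using Suc by simp
  have l1: "Suc N < 3 * t" using Suc.prems by simp
  have l2: "Suc N + 2 \<le> 3 * t" using Suc.prems by simp
  have s: "Zf t N + Zf t (Suc N) = ee t (Suc N)" by (rule Z_sum[OF assms(1) l1])
  have m: "ee t N \<le> ee t (Suc N)" by (rule ee_mono[OF assms(1) l2])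
  show ?case using IH s m by linarith
qed

lemma Gf_step: "Gf m a = Gf m (Suc a) + Ur m a"
proof -
  have "Gf m a = (\<Sum>j\<le>m. (if Suc a \<le> j then 1 else 0) * Ur m j + (if j = a then Ur m j else 0))"
    unfolding Gf_def by (rule sum.cong) auto
  also have "\<dots> = Gf m (Suc a) + (\<Sum>j\<le>m. (if j = a then Ur m j else 0))"
    unfolding Gf_def by (rule sum.distrib)
  also have "(\<Sum>j\<le>m. (if j = a then Ur m j else 0)) = Ur m a"
    by (cases "a \<le> m") (auto simp: Ur_zero)
  finally show ?thesis .
qed

lemma sum_filter_atMost:
  "(\<Sum>j\<le>(m::nat). (if P j then 1 else 0) * f j) = (\<Sum>j\<in>{j\<in>{..m}. P j}. (f j :: real))"
proof -
  have "(\<Sum>j\<le>m. (if P j then 1 else 0) * f j) = (\<Sum>j\<le>m. (if P j then f j else 0))"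
    by (rule sum.cong) auto
  also have "\<dots> = (\<Sum>j\<in>{j\<in>{..m}. P j}. f j)"
    using sum.inter_filter[of "{..m}" f P] by simp
  finally show ?thesis .
qed

lemma Dt_alt:
  "Dt t = Wf (3 * t) - Ur (3 * t) t - 2 * Gf (3 * t) (Suc t)"
proof -
  let ?m = "3 * t"
  have a: "(\<Sum>j<t. U ?m j) = (\<Sum>j\<le>?m. (if j < t then 1 else 0) * Ur ?m j)"
  proof -
    have "{j\<in>{..?m}. j < t} = {..<t}" by auto
    then show ?thesis unfolding sum_filter_atMost by (simp add: U_eq_Ur)
  qed
  have b: "(\<Sum>j\<in>{t+1..?m}. U ?m j) = Gf ?m (Suc t)"
  proof -
    have "{j\<in>{..?m}. Suc t \<le> j} = {t+1..?m}" by auto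
    then show ?thesis unfolding Gf_def sum_filter_atMost by (simp add: U_eq_Ur)
  qed
  have c: "Wf ?m = (\<Sum>j\<le>?m. (if j < t then 1 else 0) * Ur ?m j) + Gf ?m t"
  proof -
    have "Wf ?m = (\<Sum>j\<le>?m. (if j < t then 1 else 0) * Ur ?m j + (if t \<le> j then 1 else 0) * Ur ?m j)"
      unfolding Wf_def by (rule sum.cong) auto
    then show ?thesis unfolding Gf_def by (simp only: sum.distrib)
  qed
  show ?thesis unfolding Dt_def a b using c Gf_step[of ?m t] by simp
qed

lemma Ct_eq: "Ct (Suc s) = Ur (3 * s + 3) (Suc s)"
proof -
  have "3 * s + 3 - Suc s = 2 * Suc s" by simp
  then show ?thesis unfolding Ct_def Ur_def by simp
qed


lemma algebra_main:
  fixes s :: nat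
  defines "t \<equiv> Suc s"
  shows "2 * Wf (3*s+3) - 4 * Gf (3*s+3) (s+2) = 2 * Ct t + 2 * Dt t"
    and "4 * Ur (3*s+3) (s+1) = 4 * Ct t"
    and "2 * Wf (3*s+2) - 4 * Gf (3*s+2) (s+2) = 2 * Ct t - 2 * Dt t"
    and "4 * Ur (3*s+2) (s+1) = 2 * Ct t"
    and "2 * Wf (3*s+1) - 4 * Gf (3*s+1) (s+1) = 2 * Dt t"
    and "4 * Ur (3*s+1) s = Ct t"
    and "0 \<le> Dt t" and "Dt t \<le> Ct t / 2" and "0 < Ct t"
proof -
  define m1 where "m1 = 3*s+1"
  define m2 where "m2 = 3*s+2"
  define m3 where "m3 = 3*s+3"
  have m2s: "m2 = Suc m1" and m3s: "m3 = Suc (Suc m1)" unfolding m1_def m2_def m3_def by simp_all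
  have e3: "3 * t = m3" unfolding t_def m3_def by simp
  have D0: "Dt t = Wf m3 - Ur m3 t - 2 * Gf m3 (Suc t)"
    using Dt_alt[of t] unfolding e3 .
  have C0: "Ct t = Ur m3 t" using Ct_eq[of s] unfolding t_def m3_def by simp
  have W3: "Wf m3 = Wf m2 + 2 * Wf m1"
    using Wf_rec[of m1] unfolding m3s m2s .
  have G3: "Gf m3 (Suc t) = Gf m2 (Suc t) + 2 * Gf m1 t"
    using Gf_rec[of m1 t] unfolding m3s m2s .
  have U3: "Ur m3 t = Ur m2 t + 2 * Ur m1 s"
    using Ur_pascal[of m1 s] unfolding m3s m2s t_def .
  have G2: "Gf m2 t = Gf m2 (Suc t) + Ur m2 t"
    by (rule Gf_step)
  have em1: "2 * s + t = m1" unfolding t_def m1_def by simp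
  have K: "Gf m1 t + Gf m2 t = 2 ^ t * Sb (2*s+1) t"
    using K_identity[of "2*s" t] unfolding em1 m2s by simp
  have Mz: "Mid (2*s+1) t = 0" unfolding Mid_def t_def by (rule sum.neutral) auto
  have Sbv: "2 ^ (2*s+1) = 2 * Sb (2*s+1) t + Mid (2*s+1) t"
    by (rule mid_identity) (simp add: t_def)
  have Sb2: "Sb (2*s+1) t = 2 ^ (2*s)" using Sbv Mz by simp
  have pw0: "t + 2 * s = m1" unfolding t_def m1_def by simp
  have pw: "(2::real) ^ t * 2 ^ (2*s) = 2 ^ m1"
    unfolding pw0[symmetric] by (rule power_add[symmetric])
  have K2: "Gf m1 t + Gf m2 t = 2 ^ m1"
    using K Sb2 pw by simp
  have W2: "Wf m1 + Wf m2 = 2 ^ m2" using Wf_pow[of m1] unfolding m2s .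
  have p3: "(2::real) ^ m2 = 2 * 2 ^ m1" unfolding m2s by simp
  have Usym: "Ur m2 t = 2 * Ur m1 s"
  proof -
    have e1: "m2 - t = 2*s+1" "m1 - s = 2*s+1" unfolding m1_def m2_def t_def by simp_all
    have "(2*s+1) choose t = (2*s+1) choose s"
      using binomial_symmetric[of "s+1" "2*s+1"] unfolding t_def by simp
    then show ?thesis unfolding Ur_def e1 by (simp add: t_def)
  qed
  have Dz: "Dt t = Wf m1 - 2 * Gf m1 t"
    using D0 W3 G3 U3 G2 K2 W2 Usym p3 by linarith
  have Zb: "0 \<le> Zf t m1 \<and> Zf t m1 \<le> ee t m1"
    by (rule Z_bounds) (simp_all add: t_def m1_def)
  have eev: "ee t m1 = 2 ^ t * real ((2*s) choose s)"
  proof -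
    have "ee t m1 = 2 ^ t * Mid (m1 - t) t"
      by (rule ee_alt) (simp_all add: t_def m1_def)
    moreover have "m1 - t = 2 * s" by (simp add: t_def m1_def)
    moreover have "Mid (2*s) t = (\<Sum>i\<le>2*s. (if i = s then real ((2*s) choose i) else 0))"
      unfolding Mid_def t_def by (rule sum.cong) auto
    moreover have "(\<Sum>i\<le>2*s. (if i = s then real ((2*s) choose i) else 0)) = real ((2*s) choose s)"
      by simp
    ultimately show ?thesis by simp
  qed
  have Ub: "2 ^ t * real ((2*s) choose s) \<le> Ur m2 t"
  proof -
    have e1: "m2 - t = Suc (2*s)" by (simp add: m2_def t_def)
    have "(2*s) choose s \<le> Suc (2*s) choose Suc s"
      using binomial_Suc_Suc[of "2*s" s] by linarith
    then show ?thesis unfolding Ur_def e1 by (simp add: t_def)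
  qed
  have ct: "3*s+3 = m3" "3*s+2 = m2" "3*s+1 = m1" "s+2 = Suc t" "s + 1 = t"
    by (simp_all add: m1_def m2_def m3_def t_def)
  show "2 * Wf (3*s+3) - 4 * Gf (3*s+3) (s+2) = 2 * Ct t + 2 * Dt t"
    unfolding ct using D0 C0 by linarith
  show "4 * Ur (3*s+3) (s+1) = 4 * Ct t" unfolding ct using C0 by linarith
  show "2 * Wf (3*s+2) - 4 * Gf (3*s+2) (s+2) = 2 * Ct t - 2 * Dt t"
    unfolding ct using Dz C0 U3 G2 K2 W2 Usym p3 by linarith
  show "4 * Ur (3*s+2) (s+1) = 2 * Ct t" unfolding ct using C0 U3 Usym by linarith
  show "2 * Wf (3*s+1) - 4 * Gf (3*s+1) (s+1) = 2 * Dt t" unfolding ct using Dz by linarith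
  show "4 * Ur (3*s+1) s = Ct t" unfolding ct using C0 U3 Usym by linarith
  show "0 \<le> Dt t" using Zb Dz unfolding Zf_def by linarith
  show "Dt t \<le> Ct t / 2" using Zb Dz eev Ub C0 U3 Usym unfolding Zf_def by linarith
  show "0 < Ct t" unfolding Ct_def by simp
qed

lemma UNIV_letter: "(UNIV :: letter set) = {LA, LB, LC, LD}"
proof (rule set_eqI)
  fix x :: letter show "x \<in> UNIV \<longleftrightarrow> x \<in> {LA, LB, LC, LD}" by (cases x) auto
qed

lemma finite_letter: "finite (UNIV :: letter set)"
  unfolding UNIV_letter by simp

lemma card_letter [simp]: "card (UNIV :: letter set) = 4"
  unfolding UNIV_letter by simp

lemma finite_len_le: "finite {u :: letter list. length u \<le> n}"
  using finite_lists_length_le[OF finite_letter, of n] by simp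

lemma finite_len_eq: "finite {u :: letter list. length u = n}"
  by (rule finite_subset[OF _ finite_len_le[of n]]) auto

fun adm :: "letter list \<Rightarrow> bool" where
  "adm [] = False"
| "adm [x] = True"
| "adm (x # y # ys) = (trans x y > 0 \<and> adm (y # ys))"

lemma admissible_cons2: "admissible (x # y # ys) \<longleftrightarrow> trans x y > 0 \<and> admissible (y # ys)"
  unfolding admissible_def
proof safe
  fix i assume a: "\<forall>i. Suc i < length (x # y # ys) \<longrightarrow> 0 < trans ((x # y # ys) ! i) ((x # y # ys) ! Suc i)"
  show "0 < trans x y" using a[rule_format, of 0] by simp
  assume "Suc i < length (y # ys)"
  then show "0 < trans ((y # ys) ! i) ((y # ys) ! Suc i)" using a[rule_format, of "Suc i"] by simp
next
  fix i assume "0 < trans x y" and a: "\<forall>i. Suc i < length (y # ys) \<longrightarrow> 0 < trans ((y # ys) ! i) ((y # ys) ! Suc i)"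
    and "Suc i < length (x # y # ys)"
  then show "0 < trans ((x # y # ys) ! i) ((x # y # ys) ! Suc i)"
    by (cases i) auto
qed

lemma admissible_adm: "admissible u = adm u"
proof (induction u rule: adm.induct)
  case 1 then show ?case unfolding admissible_def by simp
next
  case (2 x) then show ?case unfolding admissible_def by simp
next
  case (3 x y ys) then show ?case using admissible_cons2 by simp
qed

definition cd :: "letter \<Rightarrow> nat" where
  "cd y = (if isCD y then 1 else 0)"

lemma Xcount_single [simp]: "Xcount [x] = 0"
  unfolding Xcount_def by simp

lemma Xcount_cons2: "Xcount (x # y # ys) = cd x + Xcount (y # ys)"
  unfolding Xcount_def cd_def by simp

lemma Xcount_le: "Xcount u + 1 \<le> length u \<or> u = []"
proof -
  have "Xcount u \<le> length (butlast u)" unfolding Xcount_def by (rule length_filter_le)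
  moreover have "length (butlast u) = length u - 1" by simp
  ultimately show ?thesis by (cases u) auto
qed

lemma trans_nonneg: "trans x y \<ge> 0"
  unfolding trans_def by (cases x) auto

lemma trans_pos: "trans x y > 0 \<Longrightarrow> trans x y = (if isCD x then 1/4 else 1/2)"
  unfolding trans_def isCD_def by (cases x) (auto split: if_splits)

lemma path_prob_adm:
  "adm (x # ys) \<Longrightarrow> path_prob x ys = (1/2) ^ (length ys + Xcount (x # ys))"
proof (induction ys arbitrary: x)
  case Nil then show ?case by simp
next
  case (Cons y ys)
  have t: "trans x y > 0" and a: "adm (y # ys)" using Cons.prems by auto
  have "path_prob x (y # ys) = trans x y * (1/2) ^ (length ys + Xcount (y # ys))"
    using Cons.IH[OF a] by simp
  also have "\<dots> = (1/2) ^ (length (y # ys) + Xcount (x # y # ys))"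
    using trans_pos[OF t] unfolding Xcount_cons2 cd_def by (auto simp: power_add)
  finally show ?case .
qed

lemma path_prob_nadm:
  "\<not> adm (x # ys) \<Longrightarrow> path_prob x ys = 0"
proof (induction ys arbitrary: x)
  case Nil then show ?case by simp
next
  case (Cons y ys)
  show ?case
  proof (cases "trans x y > 0")
    case True
    then have "\<not> adm (y # ys)" using Cons.prems by simp
    then show ?thesis using Cons.IH by simp
  next
    case False
    then have "trans x y = 0" using trans_nonneg[of x y] by simp
    then show ?thesis by simp
  qed
qed

definition kap :: "letter list \<Rightarrow> nat" where
  "kap u = length u + 1 + Xcount u"

lemma seq_prob_adm: "adm u \<Longrightarrow> seq_prob u = (1/2) ^ kap u"
proof (cases u)
  case Nil
  then show "adm u \<Longrightarrow> ?thesis" by simp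
next
  case (Cons x ys)
  assume "adm u"
  then have "path_prob x ys = (1/2) ^ (length ys + Xcount (x # ys))"
    using Cons path_prob_adm by simp
  then show ?thesis using Cons unfolding kap_def by (simp add: power_add)
qed

lemma seq_prob_nadm: "\<not> adm u \<Longrightarrow> u \<noteq> [] \<Longrightarrow> seq_prob u = 0"
  by (cases u) (auto simp: path_prob_nadm)

lemma Kc_adm: "adm u \<Longrightarrow> Kc u = real (kap u)"
proof -
  assume "adm u"
  then have "seq_prob u = inverse (2 ^ kap u)"
    using seq_prob_adm by (simp add: inverse_eq_divide power_divide)
  then show ?thesis unfolding Kc_def by (simp add: log_inverse)
qed

lemma adm_nonempty: "adm u \<Longrightarrow> u \<noteq> []" by auto

lemma kap_ge: "adm u \<Longrightarrow> 2 * Xcount u + 2 \<le> kap u \<and> length u < kap u"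
  using Xcount_le[of u] unfolding kap_def by auto

definition cls :: "nat \<Rightarrow> nat \<Rightarrow> letter list set" where
  "cls n x = {u. adm u \<and> length u = n \<and> Xcount u = x}"

definition clsh :: "nat \<Rightarrow> nat \<Rightarrow> letter \<Rightarrow> letter list set" where
  "clsh n x y = {u. adm u \<and> length u = n \<and> Xcount u = x \<and> hd u = y}"

definition succs :: "letter \<Rightarrow> letter set" where
  "succs y = {z. trans y z > 0}"

lemma finite_clsh: "finite (clsh n x y)"
  by (rule finite_subset[OF _ finite_len_eq[of n]]) (auto simp: clsh_def)

lemma finite_cls: "finite (cls n x)"
  by (rule finite_subset[OF _ finite_len_eq[of n]]) (auto simp: cls_def)

lemma clsh_1: "clsh (Suc 0) x y = (if x = 0 then {[y]} else {})"
proof -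
  have "clsh (Suc 0) x y = {u. u = [y] \<and> x = 0}"
    unfolding clsh_def by (auto simp: length_Suc_conv)
  then show ?thesis by auto
qed

lemma card_clsh_1: "card (clsh (Suc 0) x y) = (if x = 0 then 1 else 0)"
  unfolding clsh_1 by simp

lemma clsh_Suc:
  assumes "1 \<le> n"
  shows "clsh (Suc n) x y = (if cd y \<le> x then (Cons y) ` (\<Union>z\<in>succs y. clsh n (x - cd y) z) else {})"
proof (rule set_eqI)
  fix u
  show "u \<in> clsh (Suc n) x y \<longleftrightarrow> u \<in> (if cd y \<le> x then (Cons y) ` (\<Union>z\<in>succs y. clsh n (x - cd y) z) else {})"
  proof
    assume u: "u \<in> clsh (Suc n) x y"
    then obtain v where uv: "u = y # v" and lv: "length v = n"
      unfolding clsh_def by (cases u) auto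
    then obtain z w where vz: "v = z # w" using assms by (cases v) auto
    have a: "adm (y # z # w)" "Xcount (y # z # w) = x" using u uv vz unfolding clsh_def by auto
    then have "trans y z > 0" "adm (z # w)" "cd y + Xcount (z # w) = x"
      by (auto simp: Xcount_cons2)
    then show "u \<in> (if cd y \<le> x then (Cons y) ` (\<Union>z\<in>succs y. clsh n (x - cd y) z) else {})"
      using uv vz lv unfolding clsh_def succs_def by auto
  next
    assume u: "u \<in> (if cd y \<le> x then (Cons y) ` (\<Union>z\<in>succs y. clsh n (x - cd y) z) else {})"
    then have c: "cd y \<le> x" by (auto split: if_splits)
    then obtain z v where uv: "u = y # v" and z: "trans y z > 0" and v: "v \<in> clsh n (x - cd y) z"
      using u unfolding succs_def by auto
    then obtain w where vz: "v = z # w" using assms unfolding clsh_def by (cases v) auto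
    show "u \<in> clsh (Suc n) x y"
      using uv vz v z c unfolding clsh_def by (auto simp: Xcount_cons2)
  qed
qed

lemma clsh_disj: "z \<noteq> z' \<Longrightarrow> clsh n x z \<inter> clsh n x' z' = {}"
  unfolding clsh_def by auto

lemma card_clsh_Suc:
  assumes "1 \<le> n"
  shows "card (clsh (Suc n) x y) = (if cd y \<le> x then (\<Sum>z\<in>succs y. card (clsh n (x - cd y) z)) else 0)"
proof (cases "cd y \<le> x")
  case True
  have "card (clsh (Suc n) x y) = card (\<Union>z\<in>succs y. clsh n (x - cd y) z)"
    unfolding clsh_Suc[OF assms] using True by (simp add: card_image)
  also have "\<dots> = (\<Sum>z\<in>succs y. card (clsh n (x - cd y) z))"
    by (rule card_UN_disjoint) (auto simp: finite_clsh clsh_disj intro: rev_finite_subset[OF finite_letter])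
  finally show ?thesis using True by simp
next
  case False then show ?thesis unfolding clsh_Suc[OF assms] by simp
qed

lemma succs_vals: "succs LA = {LA, LC}" "succs LB = {LB, LD}" "succs LC = UNIV" "succs LD = UNIV"
  unfolding succs_def trans_def by (auto simp: UNIV_letter)

lemma sum_UNIV_letter: "(\<Sum>z\<in>(UNIV::letter set). f z) = f LA + f LB + f LC + f LD"
  unfolding UNIV_letter by (simp add: add.assoc)

definition hc :: "nat \<Rightarrow> nat \<Rightarrow> letter \<Rightarrow> nat" where
  "hc m x y = (if isCD y then (if x = 0 then 0 else 2 ^ (x+1) * (m choose (x - 1))) else 2 ^ (x+1) * (m choose x))"

lemma binom_shift: "(m choose x) + (if x = 0 then 0 else m choose (x - 1)) = Suc m choose x"
  by (cases x) auto

lemma hc_sum_a: "hc m x LA + hc m x LC = 2 ^ (x+1) * (Suc m choose x)"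
proof (cases x)
  case 0 then show ?thesis unfolding hc_def isCD_def by simp
next
  case (Suc x')
  have "hc m x LA + hc m x LC = 2 ^ (x+1) * ((m choose Suc x') + (m choose x'))"
    unfolding hc_def isCD_def Suc by (simp add: algebra_simps)
  then show ?thesis using Suc by simp
qed

lemma card_clsh: "card (clsh (Suc (Suc m)) x y) = hc m x y"
proof (induction m arbitrary: x y)
  case 0
  show ?case
    unfolding card_clsh_Suc[of "Suc 0", simplified] card_clsh_1
    by (cases y; cases x) (auto simp: succs_vals sum_UNIV_letter hc_def cd_def isCD_def)
next
  case (Suc m)
  have e: "card (clsh (Suc (Suc (Suc m))) x y)
      = (if cd y \<le> x then (\<Sum>z\<in>succs y. hc m (x - cd y) z) else 0)"
    using card_clsh_Suc[of "Suc (Suc m)" x y] Suc.IH by simp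
  have hb: "hc m x' LB = hc m x' LA" "hc m x' LD = hc m x' LC" for x'
    unfolding hc_def isCD_def by auto
  show ?case
  proof (cases y)
    case LA then show ?thesis using e hc_sum_a[of m x] by (simp add: succs_vals cd_def isCD_def hc_def)
  next
    case LB then show ?thesis using e hc_sum_a[of m x] hb by (simp add: succs_vals cd_def isCD_def hc_def)
  next
    case LC
    show ?thesis
    proof (cases x)
      case 0 then show ?thesis using e LC by (simp add: cd_def isCD_def hc_def)
    next
      case (Suc x')
      have "card (clsh (Suc (Suc (Suc m))) x y) = 2 * (hc m x' LA + hc m x' LC)"
        using e hb Suc LC by (simp add: succs_vals sum_UNIV_letter cd_def isCD_def)
      then show ?thesis using hc_sum_a[of m x'] Suc LC by (simp add: hc_def isCD_def)
    qed
  next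
    case LD
    show ?thesis
    proof (cases x)
      case 0 then show ?thesis using e LD by (simp add: cd_def isCD_def hc_def)
    next
      case (Suc x')
      have "card (clsh (Suc (Suc (Suc m))) x y) = 2 * (hc m x' LA + hc m x' LC)"
        using e hb Suc LD by (simp add: succs_vals sum_UNIV_letter cd_def isCD_def)
      then show ?thesis using hc_sum_a[of m x'] Suc LD by (simp add: hc_def isCD_def)
    qed
  qed
qed

lemma cls_UN: "1 \<le> n \<Longrightarrow> cls n x = (\<Union>y\<in>UNIV. clsh n x y)"
  unfolding cls_def clsh_def by auto

lemma card_cls_hc: "1 \<le> n \<Longrightarrow> card (cls n x) = (\<Sum>y\<in>UNIV. card (clsh n x y))"
  unfolding cls_UN by (rule card_UN_disjoint) (auto simp: finite_letter finite_clsh clsh_disj)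

lemma card_cls: "card (cls (Suc m) x) = 4 * 2 ^ x * (m choose x)"
proof (cases m)
  case 0
  then show ?thesis using card_cls_hc[of "Suc 0" x] by (simp add: sum_UNIV_letter card_clsh_1)
next
  case (Suc k)
  have hb: "hc k x LB = hc k x LA" "hc k x LD = hc k x LC"
    unfolding hc_def isCD_def by auto
  have "card (cls (Suc m) x) = 2 * (hc k x LA + hc k x LC)"
    using card_cls_hc[of "Suc m" x] Suc hb by (simp add: sum_UNIV_letter card_clsh)
  then show ?thesis using hc_sum_a[of k x] Suc by simp
qed

lemma card_fibres:
  assumes "finite A" "finite B" "\<And>a. a \<in> A \<Longrightarrow> f a \<in> B"
  shows "card A = (\<Sum>b\<in>B. card {a\<in>A. f a = b})"
proof -
  have "A = (\<Union>b\<in>B. {a\<in>A. f a = b})" using assms(3) by auto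
  then have "card A = card (\<Union>b\<in>B. {a\<in>A. f a = b})" by simp
  also have "\<dots> = (\<Sum>b\<in>B. card {a\<in>A. f a = b})"
    by (rule card_UN_disjoint) (use assms in auto)
  finally show ?thesis .
qed

lemma finite_adm_kap: "finite {v. adm v \<and> P v \<and> kap v \<le> K}"
  by (rule finite_subset[OF _ finite_len_le[of K]]) (auto dest: kap_ge)

lemma card_KX:
  "real (card {v. adm v \<and> kap v = m + 2 \<and> Xcount v = j}) = 4 * Ur m j"
proof (cases "j \<le> m")
  case True
  have "{v. adm v \<and> kap v = m + 2 \<and> Xcount v = j} = cls (Suc (m - j)) j"
    unfolding cls_def kap_def using True by auto
  then show ?thesis using card_cls[of "m - j" j] unfolding Ur_def by simp
next
  case False
  have e: "{v. adm v \<and> kap v = m + 2 \<and> Xcount v = j} = {}"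
    using False kap_ge by fastforce
  show ?thesis unfolding e using False by (simp add: Ur_zero)
qed

lemma card_Kset_gen:
  "real (card {v. adm v \<and> kap v = m + 2 \<and> P (Xcount v)})
   = 4 * (\<Sum>j\<le>m. (if P j then 1 else 0) * Ur m j)"
proof -
  let ?A = "{v. adm v \<and> kap v = m + 2 \<and> P (Xcount v)}"
  have fin: "finite ?A"
    by (rule finite_subset[OF _ finite_adm_kap[of "\<lambda>v. True" "m+2"]]) auto
  have "card ?A = (\<Sum>j\<le>m. card {a\<in>?A. Xcount a = j})"
    by (rule card_fibres[OF fin]) (use kap_ge in fastforce)+
  also have "\<dots> = (\<Sum>j\<le>m. (if P j then card {v. adm v \<and> kap v = m + 2 \<and> Xcount v = j} else 0))"
  proof (rule sum.cong)
    fix j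
    show "card {a\<in>?A. Xcount a = j} = (if P j then card {v. adm v \<and> kap v = m + 2 \<and> Xcount v = j} else 0)"
    proof (cases "P j")
      case True
      then have "{a\<in>?A. Xcount a = j} = {v. adm v \<and> kap v = m + 2 \<and> Xcount v = j}" by auto
      then show ?thesis using True by simp
    next
      case False
      then have e: "{a\<in>?A. Xcount a = j} = {}" by auto
      show ?thesis using False unfolding e by simp
    qed
  qed simp
  finally have c: "card ?A = (\<Sum>j\<le>m. (if P j then card {v. adm v \<and> kap v = m + 2 \<and> Xcount v = j} else 0))" .
  have "real (card ?A) = (\<Sum>j\<le>m. (if P j then real (card {v. adm v \<and> kap v = m + 2 \<and> Xcount v = j}) else 0))"
    unfolding c of_nat_sum by (rule sum.cong) auto
  also have "\<dots> = (\<Sum>j\<le>m. (if P j then 1 else 0) * (4 * Ur m j))"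
    by (rule sum.cong) (use card_KX[of m] in auto)
  finally show ?thesis by (simp add: sum_distrib_left algebra_simps)
qed

lemma card_Kset: "real (card {v. adm v \<and> kap v = m + 2}) = 4 * Wf m"
  using card_Kset_gen[of m "\<lambda>j. True"] unfolding Wf_def by simp

lemma card_Kpart: "real (card {v. adm v \<and> kap v = m + 2 \<and> x < Xcount v}) = 4 * Gf m (Suc x)"
  using card_Kset_gen[of m "\<lambda>j. x < j"] unfolding Gf_def by (simp add: Suc_le_eq)

lemma card_Klt: "real (card {v. adm v \<and> kap v < m + 2}) = 2 ^ (m + 2) - 2 - 2 * Wf m"
proof -
  let ?A = "{v. adm v \<and> kap v < m + 2}"
  have fin: "finite ?A"
    by (rule finite_subset[OF _ finite_adm_kap[of "\<lambda>v. True" "m+2"]]) auto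
  have k2: "adm v \<Longrightarrow> 2 \<le> kap v" for v using kap_ge[of v] by simp
  have "card ?A = (\<Sum>i<m. card {a\<in>?A. kap a - 2 = i})"
    by (rule card_fibres[OF fin]) (use k2 in fastforce)+
  also have "\<dots> = (\<Sum>i<m. card {v. adm v \<and> kap v = i + 2})"
  proof (rule sum.cong)
    fix i assume "i \<in> {..<m}"
    then have "{a\<in>?A. kap a - 2 = i} = {v. adm v \<and> kap v = i + 2}" using k2 by fastforce
    then show "card {a\<in>?A. kap a - 2 = i} = card {v. adm v \<and> kap v = i + 2}" by simp
  qed simp
  finally have "real (card ?A) = (\<Sum>i<m. real (card {v. adm v \<and> kap v = i + 2}))"
    by (simp only: of_nat_sum)
  also have "\<dots> = (\<Sum>i<m. 4 * Wf i)"
    by (rule sum.cong) (rule refl, rule card_Kset)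
  finally have "real (card ?A) = (\<Sum>i<m. 4 * Wf i)" .
  then show ?thesis using Wf_cumsum[of m] by simp
qed

lemma rank_lt:
  assumes tr: "\<And>a b c. P a b \<Longrightarrow> P b c \<Longrightarrow> P a c"
    and irr: "\<And>a. \<not> P a a"
    and "P a b" "Q a" "finite {y. Q y \<and> P y b}"
  shows "card {y. Q y \<and> P y a} < card {y. Q y \<and> P y b}"
proof (rule psubset_card_mono)
  show "finite {y. Q y \<and> P y b}" by fact
  show "{y. Q y \<and> P y a} \<subset> {y. Q y \<and> P y b}"
    using assms by blast
qed

lemma rank_inj:
  assumes tr: "\<And>a b c. P a b \<Longrightarrow> P b c \<Longrightarrow> P a c"
    and irr: "\<And>a. \<not> P a a"
    and tot: "\<And>a b. a \<in> A \<Longrightarrow> b \<in> A \<Longrightarrow> a \<noteq> b \<Longrightarrow> P a b \<or> P b a"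
    and sub: "\<And>a. a \<in> A \<Longrightarrow> Q a"
    and fin: "\<And>a. a \<in> A \<Longrightarrow> finite {y. Q y \<and> P y a}"
  shows "inj_on (\<lambda>a. card {y. Q y \<and> P y a}) A"
proof (rule inj_onI)
  fix a b assume a: "a \<in> A" and b: "b \<in> A"
    and eq: "card {y. Q y \<and> P y a} = card {y. Q y \<and> P y b}"
  show "a = b"
  proof (rule ccontr)
    assume "a \<noteq> b"
    then have "P a b \<or> P b a" using tot a b by blast
    then show False
    proof
      assume "P a b"
      then show False using rank_lt[of P a b Q, OF tr irr] sub[OF a] fin[OF b] eq by auto
    next
      assume "P b a"
      then show False using rank_lt[of P b a Q, OF tr irr] sub[OF b] fin[OF a] eq by auto
    qed
  qed
qed

definition Rn :: "(nat \<times> nat) set" where "Rn = {(a, b). a < b}"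
definition Rb :: "(bool \<times> bool) set" where "Rb = {(a, b). a < b}"

lemma trans_Rn: "Relation.trans Rn" unfolding Rn_def Relation.trans_def by auto
lemma trans_Rb: "Relation.trans Rb" unfolding Rb_def Relation.trans_def by auto

lemma aprec_trans: "aprec a b \<Longrightarrow> aprec b c \<Longrightarrow> aprec a c"
  unfolding aprec_def Rn_def[symmetric]
  using lexord_trans[OF _ _ trans_Rn, of "map idx a" "map idx b" "map idx c"] by auto

lemma aprec_irrefl: "\<not> aprec a a"
  unfolding aprec_def by (auto simp: lexord_irreflexive)

lemma inj_idx: "inj idx"
proof (rule injI)
  fix a b show "idx a = idx b \<Longrightarrow> a = b" unfolding idx_def by (cases a; cases b) auto
qed

lemma aprec_total: "a \<noteq> b \<Longrightarrow> aprec a b \<or> aprec b a"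
proof -
  assume ne: "a \<noteq> b"
  have "map idx a \<noteq> map idx b" using ne inj_idx by simp
  moreover have lin: "\<forall>a b. (a, b) \<in> Rn \<or> a = b \<or> (b, a) \<in> Rn" unfolding Rn_def by auto
  ultimately have "(map idx a, map idx b) \<in> lexord Rn \<or> (map idx b, map idx a) \<in> lexord Rn"
    using lexord_linear[OF lin, of "map idx a" "map idx b"] by blast
  then show ?thesis unfolding aprec_def Rn_def[symmetric] by auto
qed

lemma bprec_trans: "bprec a b \<Longrightarrow> bprec b c \<Longrightarrow> bprec a c"
  unfolding bprec_def Rb_def[symmetric]
  using lexord_trans[OF _ _ trans_Rb, of a b c] by auto

lemma bprec_irrefl: "\<not> bprec a a"
  unfolding bprec_def by (auto simp: lexord_irreflexive)

lemma bprec_total: "a \<noteq> b \<Longrightarrow> bprec a b \<or> bprec b a"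
proof -
  assume ne: "a \<noteq> b"
  have lin: "\<forall>a b. (a, b) \<in> Rb \<or> a = b \<or> (b, a) \<in> Rb" unfolding Rb_def by auto
  have "(a, b) \<in> lexord Rb \<or> (b, a) \<in> lexord Rb"
    using lexord_linear[OF lin, of a b] ne by blast
  then show ?thesis unfolding bprec_def Rb_def[symmetric] by auto
qed

lemma fin_pre_a: "adm u \<Longrightarrow> finite {v. admissible v \<and> aprec v u}"
proof -
  assume u: "adm u"
  have "{v. admissible v \<and> aprec v u} \<subseteq> {v. length v \<le> kap u}"
  proof
    fix v assume "v \<in> {v. admissible v \<and> aprec v u}"
    then have v: "adm v" "aprec v u" by (auto simp: admissible_adm)
    then have "Kc v \<le> Kc u" unfolding aprec_def by auto
    then have "kap v \<le> kap u" using Kc_adm[OF v(1)] Kc_adm[OF u] by simp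
    then show "v \<in> {v. length v \<le> kap u}" using kap_ge[OF v(1)] by simp
  qed
  then show ?thesis using finite_len_le finite_subset by blast
qed

lemma finite_bool_le: "finite {v :: bool list. length v \<le> n}"
  using finite_lists_length_le[of "UNIV :: bool set" n] by simp

lemma fin_pre_b: "finite {v. v \<noteq> [] \<and> bprec v w}"
  by (rule finite_subset[OF _ finite_bool_le[of "length w"]]) (auto simp: bprec_def)

lemma card_bool_eq: "card {v :: bool list. length v = i} = 2 ^ i"
  using card_lists_length_eq[of "UNIV :: bool set" i] by simp

lemma card_bool_lt: "card {v :: bool list. length v < L} = 2 ^ L - 1"
proof (induction L)
  case 0 then show ?case by simp
next
  case (Suc L)
  have "{v :: bool list. length v < Suc L} = {v. length v < L} \<union> {v. length v = L}" by auto
  moreover have "card ({v :: bool list. length v < L} \<union> {v. length v = L}) = card {v :: bool list. length v < L} + card {v :: bool list. length v = L}"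
    by (rule card_Un_disjoint) (auto intro: finite_subset[OF _ finite_bool_le[of L]])
  ultimately show ?case using Suc card_bool_eq[of L] by (simp add: one_le_power)
qed

lemma card_bool_ne_lt: "card {v :: bool list. v \<noteq> [] \<and> length v < L} = 2 ^ L - 2"
proof (cases L)
  case 0 then show ?thesis by simp
next
  case (Suc L')
  have "{v :: bool list. v \<noteq> [] \<and> length v < L} = {v. length v < L} - {[]}" by auto
  moreover have "[] \<in> {v :: bool list. length v < L}" using Suc by simp
  moreover have "finite {v :: bool list. length v < L}" by (rule finite_subset[OF _ finite_bool_le[of L]]) auto
  ultimately show ?thesis using card_bool_lt[of L] by (simp add: card_Diff_singleton)
qed

lemma brank_bounds:
  assumes "w \<noteq> []"
  shows "2 ^ length w \<le> brank w + 2 \<and> brank w + 2 < 2 ^ (length w + 1)"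
proof -
  let ?l = "length w"
  have l1: "1 \<le> ?l" using assms by (cases w) auto
  have s1: "{v. v \<noteq> [] \<and> length v < ?l} \<subseteq> {v. v \<noteq> [] \<and> bprec v w}"
    unfolding bprec_def by auto
  have "2 ^ ?l - 2 \<le> brank w"
    unfolding brank_def using card_mono[OF fin_pre_b s1] card_bool_ne_lt[of ?l] by simp
  moreover have "2 \<le> (2::nat) ^ ?l" using l1
    by (metis power_increasing_iff power_one_right one_less_numeral_iff semiring_norm(76))
  ultimately have lo: "2 ^ ?l \<le> brank w + 2" by simp
  have s2: "{v. v \<noteq> [] \<and> bprec v w} \<subseteq> {v. v \<noteq> [] \<and> length v < ?l} \<union> ({v. length v = ?l} - {w})"
  proof
    fix v assume "v \<in> {v. v \<noteq> [] \<and> bprec v w}"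
    then have v: "v \<noteq> []" "bprec v w" by auto
    have "v \<noteq> w" using v(2) bprec_irrefl by auto
    then show "v \<in> {v. v \<noteq> [] \<and> length v < ?l} \<union> ({v. length v = ?l} - {w})"
      using v unfolding bprec_def by auto
  qed
  have f1: "finite {v :: bool list. v \<noteq> [] \<and> length v < ?l}" by (rule finite_subset[OF _ finite_bool_le[of ?l]]) auto
  have f2: "finite {v :: bool list. length v = ?l}" by (rule finite_subset[OF _ finite_bool_le[of ?l]]) auto
  have "brank w \<le> card ({v. v \<noteq> [] \<and> length v < ?l} \<union> ({v. length v = ?l} - {w}))"
    unfolding brank_def by (rule card_mono[OF _ s2]) (use f1 f2 in simp)
  also have "\<dots> \<le> card {v :: bool list. v \<noteq> [] \<and> length v < ?l} + card ({v :: bool list. length v = ?l} - {w})"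
    by (rule card_Un_le)
  also have "card ({v :: bool list. length v = ?l} - {w}) = 2 ^ ?l - 1"
    using card_bool_eq[of ?l] f2 by (simp add: card_Diff_singleton)
  finally have "brank w \<le> (2 ^ ?l - 2) + (2 ^ ?l - 1)" using card_bool_ne_lt[of ?l] by simp
  then have hi: "brank w + 2 < 2 ^ (?l + 1)" using \<open>2 \<le> 2 ^ ?l\<close> by simp
  show ?thesis using lo hi by simp
qed

lemma brank_inj: "inj_on brank {w. w \<noteq> []}"
proof -
  have "inj_on (\<lambda>a. card {y. y \<noteq> [] \<and> bprec y a}) {w. w \<noteq> []}"
    by (rule rank_inj[where P=bprec]) (auto intro: bprec_trans simp: bprec_irrefl bprec_total fin_pre_b)
  then show ?thesis unfolding brank_def .
qed

lemma brank_surj: "\<exists>w. w \<noteq> [] \<and> brank w = r"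
proof -
  let ?L = "Suc (Suc r)"
  let ?A = "{w :: bool list. w \<noteq> [] \<and> length w < ?L}"
  have finA: "finite ?A" by (rule finite_subset[OF _ finite_bool_le[of ?L]]) auto
  have cA: "card ?A = 2 ^ ?L - 2" by (rule card_bool_ne_lt)
  have sub: "brank ` ?A \<subseteq> {..< 2 ^ ?L - 2}"
  proof
    fix b assume "b \<in> brank ` ?A"
    then obtain w where w: "w \<noteq> []" "length w < ?L" and b: "b = brank w" by auto
    have "brank w + 2 < 2 ^ (length w + 1)" using brank_bounds[OF w(1)] by simp
    also have "(2::nat) ^ (length w + 1) \<le> 2 ^ ?L" using w(2) by (intro power_increasing) auto
    finally show "b \<in> {..< 2 ^ ?L - 2}" using b by simp
  qed
  have "card (brank ` ?A) = card ?A"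
    by (rule card_image) (rule inj_on_subset[OF brank_inj], auto)
  then have "brank ` ?A = {..< 2 ^ ?L - 2}"
    using cA sub by (intro card_subset_eq) auto
  moreover have "r < 2 ^ ?L - 2"
  proof -
    have "Suc (Suc r) < 2 ^ Suc (Suc r)" by (rule less_exp)
    then show ?thesis by simp
  qed
  ultimately have "r \<in> brank ` ?A" by auto
  then show ?thesis by auto
qed

lemma brank_ex1: "\<exists>!w. w \<noteq> [] \<and> brank w = r"
  using brank_surj[of r] brank_inj unfolding inj_on_def by blast

lemma code_prop: "code u \<noteq> [] \<and> brank (code u) = arank u"
  unfolding code_def by (rule theI'[OF brank_ex1])

lemma code_len:
  "2 ^ length (code u) \<le> arank u + 2 \<and> arank u + 2 < 2 ^ (length (code u) + 1)"
  using brank_bounds[of "code u"] code_prop[of u] by simp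

lemma Iev_iff:
  assumes u: "adm u" and k2: "2 \<le> kap u" and lo: "2 ^ (kap u - 1) \<le> arank u + 2"
  shows "Iev u \<longleftrightarrow> arank u + 2 < 2 ^ kap u"
proof -
  let ?l = "length (code u)"
  have "Iev u \<longleftrightarrow> real ?l = real (kap u) - 1"
    unfolding Iev_def using Kc_adm[OF u] by simp
  also have "\<dots> \<longleftrightarrow> ?l + 1 = kap u" using k2 by auto
  also have "\<dots> \<longleftrightarrow> arank u + 2 < 2 ^ kap u"
  proof
    assume "?l + 1 = kap u" then show "arank u + 2 < 2 ^ kap u" using code_len[of u] by simp
  next
    assume hi: "arank u + 2 < 2 ^ kap u"
    have c: "2 ^ ?l \<le> arank u + 2" "arank u + 2 < 2 ^ (?l + 1)" using code_len[of u] by auto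
    have "\<not> ?l + 1 < kap u"
    proof
      assume "?l + 1 < kap u"
      then have p: "(2::nat) ^ (?l + 1) \<le> 2 ^ (kap u - 1)" by (intro power_increasing) auto
      show False using p c lo by linarith
    qed
    moreover have "\<not> kap u < ?l + 1"
    proof
      assume "kap u < ?l + 1"
      then have p: "(2::nat) ^ kap u \<le> 2 ^ ?l" by (intro power_increasing) auto
      show False using p c hi by linarith
    qed
    ultimately show "?l + 1 = kap u" by simp
  qed
  finally show ?thesis .
qed

definition Base :: "nat \<Rightarrow> nat \<Rightarrow> letter list set" where
  "Base m x = {v. adm v \<and> kap v < m + 2} \<union> {v. adm v \<and> kap v = m + 2 \<and> x < Xcount v}"

lemma finite_Base: "finite (Base m x)"
  unfolding Base_def
  by (rule finite_subset[OF _ finite_adm_kap[of "\<lambda>v. True" "m+2"]]) auto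

lemma card_Base: "real (card (Base m x)) = 2 ^ (m + 2) - 2 - 2 * Wf m + 4 * Gf m (Suc x)"
proof -
  have "card (Base m x) = card {v. adm v \<and> kap v < m + 2} + card {v. adm v \<and> kap v = m + 2 \<and> x < Xcount v}"
    unfolding Base_def
    by (rule card_Un_disjoint)
       (auto intro: finite_subset[OF _ finite_adm_kap[of "\<lambda>v. True" "m+2"]])
  then show ?thesis using card_Klt[of m] card_Kpart[of m x] by simp
qed

lemma cls_kap: "u \<in> cls (Suc n) x \<Longrightarrow> adm u \<and> kap u = n + x + 2 \<and> length u = Suc n \<and> Xcount u = x"
  unfolding cls_def kap_def by auto

lemma arank_alt: "arank = (\<lambda>a. card {y. admissible y \<and> aprec y a})"
  unfolding arank_def by (rule ext) simp

lemma arank_bounds: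
  assumes u: "u \<in> cls (Suc n) x"
  shows "card (Base (n + x) x) \<le> arank u \<and> arank u < card (Base (n + x) x) + card (cls (Suc n) x)"
proof -
  let ?m = "n + x"
  let ?P = "{v. admissible v \<and> aprec v u}"
  have uu: "adm u" "kap u = ?m + 2" "length u = Suc n" "Xcount u = x" using cls_kap[OF u] by auto
  have Ku: "Kc u = real (?m + 2)" using Kc_adm[OF uu(1)] uu(2) by simp
  have s1: "Base ?m x \<subseteq> ?P"
  proof
    fix v assume "v \<in> Base ?m x"
    then have v: "adm v" "kap v < ?m + 2 \<or> (kap v = ?m + 2 \<and> x < Xcount v)" unfolding Base_def by auto
    have Kv: "Kc v = real (kap v)" using Kc_adm[OF v(1)] .
    show "v \<in> ?P"
    proof (cases "kap v < ?m + 2")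
      case True
      then show ?thesis using v Kv Ku by (auto simp: admissible_adm aprec_def)
    next
      case False
      then have "kap v = ?m + 2" "x < Xcount v" using v by auto
      then have "length v < length u" using uu unfolding kap_def by simp
      then show ?thesis using v Kv Ku \<open>kap v = ?m + 2\<close> by (auto simp: admissible_adm aprec_def)
    qed
  qed
  have s2: "?P \<subseteq> Base ?m x \<union> (cls (Suc n) x - {u})"
  proof
    fix v assume "v \<in> ?P"
    then have v: "adm v" "aprec v u" by (auto simp: admissible_adm)
    have Kv: "Kc v = real (kap v)" using Kc_adm[OF v(1)] .
    have "kap v < ?m + 2 \<or> (kap v = ?m + 2 \<and> (length v < length u \<or> (length v = length u \<and> v \<noteq> u)))"
      using v(2) Kv Ku aprec_irrefl[of u] unfolding aprec_def by auto
    then show "v \<in> Base ?m x \<union> (cls (Suc n) x - {u})"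
    proof (elim disjE conjE)
      assume "kap v < ?m + 2" then show ?thesis using v unfolding Base_def by auto
    next
      assume "kap v = ?m + 2" "length v < length u"
      then have "x < Xcount v" using uu unfolding kap_def by simp
      then show ?thesis using v \<open>kap v = ?m + 2\<close> unfolding Base_def by auto
    next
      assume "kap v = ?m + 2" "length v = length u" "v \<noteq> u"
      then have "Xcount v = x" using uu unfolding kap_def by simp
      then show ?thesis using v \<open>length v = length u\<close> \<open>v \<noteq> u\<close> uu unfolding cls_def by auto
    qed
  qed
  have finP: "finite ?P" using fin_pre_a[OF uu(1)] .
  have lo: "card (Base ?m x) \<le> arank u"
    unfolding arank_def by (rule card_mono[OF finP s1])
  have "arank u \<le> card (Base ?m x \<union> (cls (Suc n) x - {u}))"
    unfolding arank_def by (rule card_mono[OF _ s2]) (simp add: finite_Base finite_cls)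
  also have "\<dots> \<le> card (Base ?m x) + card (cls (Suc n) x - {u})" by (rule card_Un_le)
  also have "card (cls (Suc n) x - {u}) = card (cls (Suc n) x) - 1"
    using u finite_cls by (simp add: card_Diff_singleton)
  finally have "arank u \<le> card (Base ?m x) + (card (cls (Suc n) x) - 1)" .
  moreover have "card (cls (Suc n) x) \<ge> 1" using u finite_cls[of "Suc n" x]
    by (metis One_nat_def Suc_leI card_gt_0_iff empty_iff)
  ultimately show ?thesis using lo by linarith
qed

lemma arank_inj: "inj_on arank (cls n x)"
  unfolding arank_alt
  by (rule rank_inj[where P=aprec])
     (auto intro: aprec_trans simp: aprec_irrefl aprec_total cls_def admissible_adm fin_pre_a[unfolded admissible_adm])

lemma arank_image:
  "arank ` cls (Suc n) x = {card (Base (n + x) x) ..< card (Base (n + x) x) + card (cls (Suc n) x)}"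
proof (rule card_subset_eq)
  show "finite {card (Base (n + x) x) ..< card (Base (n + x) x) + card (cls (Suc n) x)}" by simp
  show "arank ` cls (Suc n) x \<subseteq> {card (Base (n + x) x) ..< card (Base (n + x) x) + card (cls (Suc n) x)}"
    using arank_bounds by fastforce
  show "card (arank ` cls (Suc n) x) = card {card (Base (n + x) x) ..< card (Base (n + x) x) + card (cls (Suc n) x)}"
    using card_image[OF arank_inj] by simp
qed

lemma sum_seq_prob:
  "(\<Sum>u\<in>{u. length u = Suc n \<and> Xcount u = x \<and> P u}. seq_prob u)
   = (1/2) ^ (n + x + 2) * real (card {u\<in>cls (Suc n) x. P u})"
proof -
  let ?A = "{u. length u = Suc n \<and> Xcount u = x \<and> P u}"
  have finA: "finite ?A" by (rule finite_subset[OF _ finite_len_eq[of "Suc n"]]) auto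
  have "(\<Sum>u\<in>?A. seq_prob u) = (\<Sum>u\<in>?A. (if adm u then (1/2) ^ (n + x + 2) else 0))"
  proof (rule sum.cong)
    fix u assume u: "u \<in> ?A"
    show "seq_prob u = (if adm u then (1/2) ^ (n + x + 2) else 0)"
    proof (cases "adm u")
      case True
      have "kap u = n + x + 2" using u unfolding kap_def by simp
      then show ?thesis using seq_prob_adm[OF True] True by simp
    next
      case False
      have "u \<noteq> []" using u by auto
      then show ?thesis using seq_prob_nadm[OF False] False by simp
    qed
  qed simp
  also have "\<dots> = (\<Sum>u\<in>{u\<in>?A. adm u}. (1/2) ^ (n + x + 2))"
    using sum.inter_filter[OF finA, of "\<lambda>u. (1/2::real) ^ (n + x + 2)" adm] by simp
  also have "{u\<in>?A. adm u} = {u\<in>cls (Suc n) x. P u}" unfolding cls_def by auto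
  finally show ?thesis by simp
qed

lemma g_formula:
  fixes n x :: nat
  defines "m \<equiv> n + x"
  assumes c0: "0 \<le> 2 * Wf m - 4 * Gf m (Suc x)"
    and cM: "2 * Wf m - 4 * Gf m (Suc x) \<le> 4 * Ur m x"
  shows "g (Suc n) x = (2 * Wf m - 4 * Gf m (Suc x)) / (4 * Ur m x)"
proof -
  let ?C = "cls (Suc n) x"
  let ?q = "(1/2::real) ^ (m + 2)"
  let ?b = "card (Base m x)"
  let ?M = "card ?C"
  let ?c = "2 * Wf m - 4 * Gf m (Suc x)"
  have S0: "(\<Sum>u\<in>{u. length u = Suc n \<and> Xcount u = x}. seq_prob u) = ?q * real ?M"
    using sum_seq_prob[of n x "\<lambda>u. True"] unfolding m_def by simp
  have S1: "(\<Sum>u\<in>{u. length u = Suc n \<and> Xcount u = x \<and> Iev u}. seq_prob u) = ?q * real (card {u\<in>?C. Iev u})"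
    using sum_seq_prob[of n x Iev] unfolding m_def by simp
  have CM: "real ?M = 4 * Ur m x"
  proof -
    have "?C = {v. adm v \<and> kap v = m + 2 \<and> Xcount v = x}"
      unfolding cls_def kap_def m_def by auto
    then show ?thesis using card_KX[of m x] by simp
  qed
  have bR: "real ?b = 2 ^ (m + 2) - 2 - 2 * Wf m + 4 * Gf m (Suc x)" by (rule card_Base)
  have Wle: "Wf m \<le> 2 ^ m" by (rule Wf_le)
  have b2: "?b + 2 \<le> 2 ^ (m + 2)"
  proof -
    have "real ?b + 2 \<le> 2 ^ (m + 2)" using bR c0 by simp
    then have "real (?b + 2) \<le> real ((2::nat) ^ (m + 2))" by simp
    then show ?thesis by (simp only: of_nat_le_iff)
  qed
  define cN where "cN = 2 ^ (m + 2) - 2 - ?b"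
  have cNr: "real cN = ?c" unfolding cN_def using b2 bR by (simp add: of_nat_diff)
  have cNM: "cN \<le> ?M"
  proof -
    have "real cN \<le> real ?M" using cNr cM CM by simp
    then show ?thesis by simp
  qed
  have lowb: "2 ^ (m + 1) \<le> ?b + 2"
  proof -
    have "(2::real) ^ (m + 2) = 4 * 2 ^ m" "(2::real) ^ (m + 1) = 2 * 2 ^ m" by simp_all
    then have "real ((2::nat) ^ (m + 1)) \<le> real (?b + 2)" using bR Wle Gf_nonneg[of m "Suc x"] by simp
    then show ?thesis by (simp only: of_nat_le_iff)
  qed
  have Iev_C: "{u\<in>?C. Iev u} = {u\<in>?C. arank u + 2 < 2 ^ (m + 2)}"
  proof (rule Collect_cong)
    fix u
    show "(u \<in> ?C \<and> Iev u) = (u \<in> ?C \<and> arank u + 2 < 2 ^ (m + 2))"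
    proof (cases "u \<in> ?C")
      case True
      have uu: "adm u" "kap u = m + 2" using cls_kap[OF True] unfolding m_def by auto
      have "?b \<le> arank u" using arank_bounds[OF True] unfolding m_def by simp
      then have "2 ^ (kap u - 1) \<le> arank u + 2" using lowb uu(2) by simp
      then have "Iev u \<longleftrightarrow> arank u + 2 < 2 ^ kap u" using Iev_iff[OF uu(1)] uu(2) by simp
      then show ?thesis using True uu(2) by simp
    next
      case False then show ?thesis by simp
    qed
  qed
  have "card {u\<in>?C. arank u + 2 < 2 ^ (m + 2)} = card (arank ` {u\<in>?C. arank u + 2 < 2 ^ (m + 2)})"
    by (rule card_image[symmetric]) (rule inj_on_subset[OF arank_inj], auto)
  also have "arank ` {u\<in>?C. arank u + 2 < 2 ^ (m + 2)} = {r \<in> arank ` ?C. r + 2 < 2 ^ (m + 2)}" by auto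
  also have "\<dots> = {r \<in> {?b..<?b + ?M}. r + 2 < 2 ^ (m + 2)}"
    using arank_image[of n x] unfolding m_def by simp
  also have "\<dots> = {?b..<?b + cN}" using cNM b2 unfolding cN_def by auto
  finally have cnt: "card {u\<in>?C. Iev u} = cN" using Iev_C by simp
  have q0: "?q > 0" by simp
  have "g (Suc n) x = (?q * real cN) / (?q * real ?M)"
    unfolding g_def S0 S1 cnt ..
  also have "\<dots> = real cN / real ?M" using q0 by simp
  finally show ?thesis using cNr CM by simp
qed

theorem mainTheorem11:
  fixes t :: nat
  assumes "t \<ge> 1"
  shows "g (2 * t + 1) t = 1/2 + Dt t / (2 * Ct t)
       \<and> g (2 * t) t = 1 - Dt t / Ct t
       \<and> g (2 * t) (t - 1) = 2 * Dt t / Ct t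
       \<and> g (2 * t) (t - 1) + g (2 * t) t = 1 + Dt t / Ct t"
proof -
  obtain s where ts: "t = Suc s" using assms by (cases t) auto
  note A = algebra_main[of s, folded ts]
  have C: "0 < Ct t" using A(9) .
  have D0: "0 \<le> Dt t" and D1: "Dt t \<le> Ct t / 2" using A(7) A(8) by auto
  have g1: "g (Suc (2*s+2)) (s+1) = (2 * Wf (3*s+3) - 4 * Gf (3*s+3) (s+2)) / (4 * Ur (3*s+3) (s+1))"
  proof -
    have e: "2*s+2 + (s+1) = 3*s+3" "Suc (s+1) = s+2" by simp_all
    show ?thesis using g_formula[of "2*s+2" "s+1"] A(1) A(2) C D0 D1 unfolding e by simp
  qed
  have g2: "g (Suc (2*s+1)) (s+1) = (2 * Wf (3*s+2) - 4 * Gf (3*s+2) (s+2)) / (4 * Ur (3*s+2) (s+1))"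
  proof -
    have e: "2*s+1 + (s+1) = 3*s+2" "Suc (s+1) = s+2" by simp_all
    show ?thesis using g_formula[of "2*s+1" "s+1"] A(3) A(4) C D0 D1 unfolding e by simp
  qed
  have g3: "g (Suc (2*s+1)) s = (2 * Wf (3*s+1) - 4 * Gf (3*s+1) (s+1)) / (4 * Ur (3*s+1) s)"
  proof -
    have e: "2*s+1 + s = 3*s+1" "Suc s = s+1" by simp_all
    show ?thesis using g_formula[of "2*s+1" s] A(5) A(6) C D0 D1 unfolding e by simp
  qed
  have q1: "g (2 * t + 1) t = g (Suc (2*s+2)) (s+1)" using ts by simp
  have q2: "g (2 * t) t = g (Suc (2*s+1)) (s+1)" using ts by simp
  have q3: "g (2 * t) (t - 1) = g (Suc (2*s+1)) s" using ts by simp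
  have r1: "g (2 * t + 1) t = 1/2 + Dt t / (2 * Ct t)"
  proof -
    have "g (2 * t + 1) t = (2 * Ct t + 2 * Dt t) / (4 * Ct t)" unfolding q1 g1 A(1) A(2) ..
    then show ?thesis using C by (simp add: field_simps)
  qed
  have r2: "g (2 * t) t = 1 - Dt t / Ct t"
  proof -
    have "g (2 * t) t = (2 * Ct t - 2 * Dt t) / (2 * Ct t)" unfolding q2 g2 A(3) A(4) ..
    then show ?thesis using C by (simp add: field_simps)
  qed
  have r3: "g (2 * t) (t - 1) = 2 * Dt t / Ct t"
  proof -
    have "g (2 * t) (t - 1) = (2 * Dt t) / Ct t" unfolding q3 g3 A(5) A(6) ..
    then show ?thesis by simp
  qed
  have r4: "g (2 * t) (t - 1) + g (2 * t) t = 1 + Dt t / Ct t"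
    unfolding r2 r3 using C by (simp add: field_simps)
  show ?thesis using r1 r2 r3 r4 by blast
qed

end
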